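(* Let $(X_k;\leq_k)_{k\in K}$ be a family of pairwise disjoint nonempty posets, and let $X=\bigcup_{k\in K}X_k$ with order $\leq=\bigcup_{k\in K}\leq_k$ (disjoint union of posets). Then the following are equivalent: (i) for each $k\in K$, the space $(X_k;\tau_i(X_k))$ is compact; (ii) $(X;\tau_i(X))$ is compact.
   Context: For a poset $X$ and $x\in X$, $(x]=\{z: z\le x\}$, $[x)=\{z: z\ge x\}$. The interval topology $\tau_i(X)$ on a poset $X$ is the topology with subbase $\{X\setminus (x]: x\in X\}\cup\{X\setminus [x): x\in X\}$. *)

theory Defs
  imports "HOL-Analysis.Analysis"
begin

definition poset_on :: "'a set \<Rightarrow> ('a \<Rightarrow> 'a \<Rightarrow> bool) \<Rightarrow> bool" where
  "poset_on S le \<longleftrightarrow>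
     (\<forall>x\<in>S. le x x) \<and>
     (\<forall>x\<in>S. \<forall>y\<in>S. le x y \<and> le y x \<longrightarrow> x = y) \<and>
     (\<forall>x\<in>S. \<forall>y\<in>S. \<forall>z\<in>S. le x y \<and> le y z \<longrightarrow> le x z)"

definition down_set :: "'a set \<Rightarrow> ('a \<Rightarrow> 'a \<Rightarrow> bool) \<Rightarrow> 'a \<Rightarrow> 'a set" where
  "down_set S le x = {z \<in> S. le z x}"

definition up_set :: "'a set \<Rightarrow> ('a \<Rightarrow> 'a \<Rightarrow> bool) \<Rightarrow> 'a \<Rightarrow> 'a set" where
  "up_set S le x = {z \<in> S. le x z}"

text \<open>The whole carrier S is added to the subbase so that the
topological space is exactly S (empty finite intersection convention).\<close>

definition interval_topology :: "'a set \<Rightarrow> ('a \<Rightarrow> 'a \<Rightarrow> bool) \<Rightarrow> 'a topology" where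
  "interval_topology S le = topology_generated_by
     (insert S ((\<lambda>x. S - down_set S le x) ` S \<union> (\<lambda>x. S - up_set S le x) ` S))"

end

theory Submission
  imports Defs
begin

theorem lemma2p1:
  fixes K :: "'k set" and Xk :: "'k \<Rightarrow> 'a set" and lek :: "'k \<Rightarrow> 'a \<Rightarrow> 'a \<Rightarrow> bool"
  assumes posets: "\<And>k. k \<in> K \<Longrightarrow> poset_on (Xk k) (lek k)"
    and nonempty: "\<And>k. k \<in> K \<Longrightarrow> Xk k \<noteq> {}"
    and disjoint: "\<And>k l. k \<in> K \<Longrightarrow> l \<in> K \<Longrightarrow> k \<noteq> l \<Longrightarrow> Xk k \<inter> Xk l = {}"
  shows "(\<forall>k\<in>K. compact_space (interval_topology (Xk k) (lek k)))
     \<longleftrightarrow> compact_space (interval_topology (\<Union>k\<in>K. Xk k)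
            (\<lambda>x y. \<exists>k\<in>K. x \<in> Xk k \<and> y \<in> Xk k \<and> lek k x y))"
proof -
  define X where "X = (\<Union>k\<in>K. Xk k)"
  define le where "le = (\<lambda>x y. \<exists>k\<in>K. x \<in> Xk k \<and> y \<in> Xk k \<and> lek k x y)"
  define B where "B = insert X ((\<lambda>x. X - down_set X le x) ` X \<union> (\<lambda>x. X - up_set X le x) ` X)"
  define Bk where "Bk = (\<lambda>k. insert (Xk k) ((\<lambda>x. Xk k - down_set (Xk k) (lek k) x) ` Xk k
       \<union> (\<lambda>x. Xk k - up_set (Xk k) (lek k) x) ` Xk k))"
  have T: "interval_topology X le = topology_generated_by B"
    unfolding interval_topology_def B_def ..
  have Tk: "interval_topology (Xk k) (lek k) = topology_generated_by (Bk k)" for k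
    unfolding interval_topology_def Bk_def ..
  have uB: "\<Union>B = X" unfolding B_def by auto
  have uBk: "\<Union>(Bk k) = Xk k" for k unfolding Bk_def by auto
  have comp: "k = l" if "k \<in> K" "l \<in> K" "x \<in> Xk k" "x \<in> Xk l" for k l x
    using disjoint that by blast
  have dn: "down_set X le x = down_set (Xk k) (lek k) x" if "k \<in> K" "x \<in> Xk k" for k x
    using that comp unfolding down_set_def le_def X_def by blast
  have up: "up_set X le x = up_set (Xk k) (lek k) x" if "k \<in> K" "x \<in> Xk k" for k x
    using that comp unfolding up_set_def le_def X_def by blast
  have nle: "\<not> le z x \<and> \<not> le x z"
    if "m \<in> K" "l \<in> K" "l \<noteq> m" "x \<in> Xk m" "z \<in> Xk l" for m l x z
  proof -
    have "\<not> (\<exists>j\<in>K. x \<in> Xk j \<and> z \<in> Xk j)"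
    proof
      assume "\<exists>j\<in>K. x \<in> Xk j \<and> z \<in> Xk j"
      then obtain j where j: "j \<in> K" "x \<in> Xk j" "z \<in> Xk j" by blast
      have "j = m" using comp[OF j(1) that(1) j(2) that(4)] .
      moreover have "j = l" using comp[OF j(1) that(2) j(3) that(5)] .
      ultimately show False using that(3) by simp
    qed
    then show ?thesis unfolding le_def by blast
  qed
  have inBk1: "Xk k \<in> Bk k" for k by (simp add: Bk_def)
  have inBk2: "Xk k - down_set (Xk k) (lek k) x \<in> Bk k" if "x \<in> Xk k" for k x
    using that by (simp add: Bk_def)
  have inBk3: "Xk k - up_set (Xk k) (lek k) x \<in> Bk k" if "x \<in> Xk k" for k x
    using that by (simp add: Bk_def)
  have XkX: "Xk k \<subseteq> X" if "k \<in> K" for k using that X_def by auto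
  have memX: "generate_topology_on B X" by (rule generate_topology_on.Basis) (simp add: B_def)
  have memD: "generate_topology_on B (X - down_set X le x)" if "x \<in> X" for x
    by (rule generate_topology_on.Basis) (use that in \<open>simp add: B_def\<close>)
  have memU: "generate_topology_on B (X - up_set X le x)" if "x \<in> X" for x
    by (rule generate_topology_on.Basis) (use that in \<open>simp add: B_def\<close>)
  have L1: "V = {} \<or> generate_topology_on B (V \<union> (X - Xk k))"
    if k: "k \<in> K" and g: "generate_topology_on (Bk k) V" for k V
    using g
  proof (induct)
    case Empty then show ?case by simp
  next
    case (Int a b)
    show ?case
    proof (cases "a = {} \<or> b = {}")
      case True then show ?thesis by auto
    next
      case False
      then have "generate_topology_on B (a \<union> (X - Xk k))" "generate_topology_on B (b \<union> (X - Xk k))"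
        using Int by auto
      then have "generate_topology_on B ((a \<union> (X - Xk k)) \<inter> (b \<union> (X - Xk k)))"
        by (rule generate_topology_on.Int)
      moreover have "(a \<union> (X - Xk k)) \<inter> (b \<union> (X - Xk k)) = (a \<inter> b) \<union> (X - Xk k)" by auto
      ultimately show ?thesis by simp
    qed
  next
    case (UN KK)
    show ?case
    proof (cases "\<forall>u\<in>KK. u = {}")
      case True then show ?thesis by auto
    next
      case False
      define KK' where "KK' = (\<lambda>u. u \<union> (X - Xk k)) ` {u \<in> KK. u \<noteq> {}}"
      have "generate_topology_on B (\<Union>KK')"
        apply (rule generate_topology_on.UN) using UN unfolding KK'_def by auto
      moreover have "\<Union>KK' = \<Union>KK \<union> (X - Xk k)" using False unfolding KK'_def by auto
      ultimately show ?thesis by simp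
    qed
  next
    case (Basis s)
    then consider "s = Xk k" | x where "x \<in> Xk k" "s = Xk k - down_set (Xk k) (lek k) x"
      | x where "x \<in> Xk k" "s = Xk k - up_set (Xk k) (lek k) x"
      unfolding Bk_def by auto
    then show ?case
    proof cases
      case 1
      then have "s \<union> (X - Xk k) = X" using XkX k by auto
      then show ?thesis using memX by simp
    next
      case (2 x)
      have xX: "x \<in> X" using 2 XkX k by auto
      have "s \<union> (X - Xk k) = X - down_set X le x" using 2 dn[OF k 2(1)] XkX[OF k]
        unfolding down_set_def by auto
      then show ?thesis using memD[OF xX] by simp
    next
      case (3 x)
      have xX: "x \<in> X" using 3 XkX k by auto
      have "s \<union> (X - Xk k) = X - up_set X le x" using 3 up[OF k 3(1)] XkX[OF k]
        unfolding up_set_def by auto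
      then show ?thesis using memU[OF xX] by simp
    qed
  qed
  have L2: "U = {} \<or> (\<exists>F. finite F \<and> (\<forall>l\<in>K - F. Xk l \<subseteq> U))"
    if g: "generate_topology_on B U" for U
    using g
  proof (induct)
    case Empty then show ?case by simp
  next
    case (Int a b)
    show ?case
    proof (cases "a = {} \<or> b = {}")
      case True then show ?thesis by auto
    next
      case False
      then obtain F1 F2 where "finite F1" "\<forall>l\<in>K - F1. Xk l \<subseteq> a" "finite F2" "\<forall>l\<in>K - F2. Xk l \<subseteq> b"
        using Int by auto
      then show ?thesis by (intro disjI2 exI[of _ "F1 \<union> F2"]) auto
    qed
  next
    case (UN KK)
    show ?case
    proof (cases "\<forall>u\<in>KK. u = {}")
      case True then show ?thesis by auto
    next
      case False
      then obtain u F where "u \<in> KK" "finite F" "\<forall>l\<in>K - F. Xk l \<subseteq> u" using UN by blast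
      then show ?thesis by blast
    qed
  next
    case (Basis s)
    then consider "s = X" | x where "x \<in> X" "s = X - down_set X le x"
      | x where "x \<in> X" "s = X - up_set X le x"
      unfolding B_def by auto
    then show ?case
    proof cases
      case 1 then show ?thesis using XkX by (intro disjI2 exI[of _ "{}"]) auto
    next
      case (2 x)
      then obtain k where k: "k \<in> K" "x \<in> Xk k" unfolding X_def by auto
      have "\<forall>l\<in>K - {k}. Xk l \<subseteq> s"
      proof (intro ballI subsetI)
        fix l z assume l: "l \<in> K - {k}" and z: "z \<in> Xk l"
        have zX: "z \<in> X" using l z XkX by auto
        have "\<not> le z x"
        proof
          assume "le z x"
          then obtain m where m: "m \<in> K" "z \<in> Xk m" "x \<in> Xk m" unfolding le_def by auto
          have "m = k" using comp[OF m(1) k(1) m(3) k(2)] .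
          moreover have "m = l" using comp[OF m(1) _ m(2) z] l by auto
          ultimately show False using l by auto
        qed
        then show "z \<in> s" using 2 zX unfolding down_set_def by auto
      qed
      then show ?thesis by blast
    next
      case (3 x)
      then obtain k where k: "k \<in> K" "x \<in> Xk k" unfolding X_def by auto
      have "\<forall>l\<in>K - {k}. Xk l \<subseteq> s"
      proof (intro ballI subsetI)
        fix l z assume l: "l \<in> K - {k}" and z: "z \<in> Xk l"
        have zX: "z \<in> X" using l z XkX by auto
        have "\<not> le x z"
        proof
          assume "le x z"
          then obtain m where m: "m \<in> K" "z \<in> Xk m" "x \<in> Xk m" unfolding le_def by auto
          have "m = k" using comp[OF m(1) k(1) m(3) k(2)] .
          moreover have "m = l" using comp[OF m(1) _ m(2) z] l by auto
          ultimately show False using l by auto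
        qed
        then show "z \<in> s" using 3 zX unfolding up_set_def by auto
      qed
      then show ?thesis by blast
    qed
  qed
  have L3: "continuous_map (topology_generated_by (Bk k)) (topology_generated_by B) id"
    if k: "k \<in> K" for k
  proof (rule continuous_on_generated_topo)
    show "id ` topspace (topology_generated_by (Bk k)) \<subseteq> \<Union> B"
      using uB uBk XkX[OF k] by simp
  next
    fix U assume "U \<in> B"
    then consider "U = X" | x where "x \<in> X" "U = X - down_set X le x"
      | x where "x \<in> X" "U = X - up_set X le x"
      unfolding B_def by auto
    then have "id -` U \<inter> Xk k \<in> Bk k"
    proof cases
      case 1
      then have "id -` U \<inter> Xk k = Xk k" using XkX[OF k] by auto
      then show ?thesis using inBk1 by simp
    next
      case (2 x)
      obtain m where m: "m \<in> K" "x \<in> Xk m" using 2(1) unfolding X_def by auto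
      show ?thesis
      proof (cases "m = k")
        case True
        then have "id -` U \<inter> Xk k = Xk k - down_set (Xk k) (lek k) x"
        proof -
          have "U = X - down_set (Xk k) (lek k) x" using 2(2) dn[OF m] True by simp
          then show ?thesis using XkX[OF k] by auto
        qed
        then show ?thesis using m True inBk2 by simp
      next
        case False
        then have "id -` U \<inter> Xk k = Xk k"
          using 2 nle[OF m(1) k _ m(2)] XkX[OF k] unfolding down_set_def by auto
        then show ?thesis using inBk1 by simp
      qed
    next
      case (3 x)
      obtain m where m: "m \<in> K" "x \<in> Xk m" using 3(1) unfolding X_def by auto
      show ?thesis
      proof (cases "m = k")
        case True
        then have "id -` U \<inter> Xk k = Xk k - up_set (Xk k) (lek k) x"
        proof -
          have "U = X - up_set (Xk k) (lek k) x" using 3(2) up[OF m] True by simp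
          then show ?thesis using XkX[OF k] by auto
        qed
        then show ?thesis using m True inBk3 by simp
      next
        case False
        then have "id -` U \<inter> Xk k = Xk k"
          using 3 nle[OF m(1) k _ m(2)] XkX[OF k] unfolding up_set_def by auto
        then show ?thesis using inBk1 by simp
      qed
    qed
    then show "openin (topology_generated_by (Bk k)) (id -` U \<inter> topspace (topology_generated_by (Bk k)))"
      using uBk by (simp add: topology_generated_by_Basis)
  qed
  have "(\<forall>k\<in>K. compact_space (topology_generated_by (Bk k))) \<longleftrightarrow> compact_space (topology_generated_by B)"
  proof
    assume H: "\<forall>k\<in>K. compact_space (topology_generated_by (Bk k))"
    have ck: "compactin (topology_generated_by B) (Xk k)" if k: "k \<in> K" for k
      using image_compactin[OF H[rule_format, OF k, unfolded compact_space_def] L3[OF k]] uBk by simp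
    show "compact_space (topology_generated_by B)"
      unfolding compact_space_def compactin_def
    proof (intro conjI allI impI)
      show "topspace (topology_generated_by B) \<subseteq> topspace (topology_generated_by B)" by simp
      fix U assume U: "Ball U (openin (topology_generated_by B)) \<and> topspace (topology_generated_by B) \<subseteq> \<Union> U"
      show "\<exists>F. finite F \<and> F \<subseteq> U \<and> topspace (topology_generated_by B) \<subseteq> \<Union> F"
      proof (cases "X = {}")
        case True then show ?thesis using uB by (intro exI[of _ "{}"]) simp
      next
        case False
        then obtain x0 where "x0 \<in> X" by blast
        then have "x0 \<in> \<Union>U" using U uB by auto
        then obtain u0 where u0: "u0 \<in> U" "u0 \<noteq> {}" by blast
        have "generate_topology_on B u0" using U u0 openin_topology_generated_by by blast
        then have "u0 = {} \<or> (\<exists>F. finite F \<and> (\<forall>l\<in>K - F. Xk l \<subseteq> u0))" by (rule L2)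
        then obtain F where F: "finite F" "\<forall>l\<in>K - F. Xk l \<subseteq> u0"
          using u0 by blast
        have "\<forall>k\<in>F \<inter> K. \<exists>G. finite G \<and> G \<subseteq> U \<and> Xk k \<subseteq> \<Union>G"
        proof
          fix k assume "k \<in> F \<inter> K"
          then have "compactin (topology_generated_by B) (Xk k)" using ck by auto
          moreover have "Xk k \<subseteq> X" using XkX \<open>k \<in> F \<inter> K\<close> by auto
          then have "Xk k \<subseteq> \<Union>U" using U uB by auto
          ultimately show "\<exists>G. finite G \<and> G \<subseteq> U \<and> Xk k \<subseteq> \<Union>G"
            using U unfolding compactin_def by blast
        qed
        then have "\<exists>G. \<forall>k\<in>F \<inter> K. finite (G k) \<and> G k \<subseteq> U \<and> Xk k \<subseteq> \<Union>(G k)"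
          by (rule bchoice)
        then obtain G where G: "\<forall>k\<in>F \<inter> K. finite (G k) \<and> G k \<subseteq> U \<and> Xk k \<subseteq> \<Union>(G k)"
          by blast
        show ?thesis
        proof (intro exI[of _ "insert u0 (\<Union>k\<in>F \<inter> K. G k)"] conjI)
          show "finite (insert u0 (\<Union>k\<in>F \<inter> K. G k))" using F G by auto
          show "insert u0 (\<Union>k\<in>F \<inter> K. G k) \<subseteq> U" using u0 G by auto
          show "topspace (topology_generated_by B) \<subseteq> \<Union> (insert u0 (\<Union>k\<in>F \<inter> K. G k))"
          proof
            fix x assume "x \<in> topspace (topology_generated_by B)"
            then have "x \<in> X" using uB by simp
            then obtain k where k: "k \<in> K" "x \<in> Xk k" unfolding X_def by blast
            show "x \<in> \<Union> (insert u0 (\<Union>k\<in>F \<inter> K. G k))"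
            proof (cases "k \<in> F")
              case True
              then have "Xk k \<subseteq> \<Union>(G k)" using G k by blast
              then obtain g where "g \<in> G k" "x \<in> g" using k by blast
              then show ?thesis using True k by blast
            next
              case False then show ?thesis using F k by auto
            qed
          qed
        qed
      qed
    qed
  next
    assume H: "compact_space (topology_generated_by B)"
    show "\<forall>k\<in>K. compact_space (topology_generated_by (Bk k))"
    proof
      fix k assume k: "k \<in> K"
      show "compact_space (topology_generated_by (Bk k))"
        unfolding compact_space_def compactin_def
      proof (intro conjI allI impI)
        show "topspace (topology_generated_by (Bk k)) \<subseteq> topspace (topology_generated_by (Bk k))" by simp
        fix U assume U: "Ball U (openin (topology_generated_by (Bk k))) \<and> topspace (topology_generated_by (Bk k)) \<subseteq> \<Union> U"
        define U' where "U' = {u \<in> U. u \<noteq> {}}"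
        define \<phi> where "\<phi> = (\<lambda>u. u \<union> (X - Xk k))"
        have op: "openin (topology_generated_by B) (\<phi> u)" if "u \<in> U'" for u
          using that L1[OF k] U unfolding U'_def \<phi>_def
          by (auto simp: openin_topology_generated_by_iff)
        have sub: "u \<subseteq> Xk k" if "u \<in> U" for u
          using that U openin_subset uBk by fastforce
        have "U' \<noteq> {}" using U nonempty[OF k] uBk unfolding U'_def by auto
        then have cov: "topspace (topology_generated_by B) \<subseteq> \<Union>(\<phi> ` U')"
          using U uB uBk unfolding U'_def \<phi>_def by auto
        obtain F' where F': "finite F'" "F' \<subseteq> \<phi> ` U'" "topspace (topology_generated_by B) \<subseteq> \<Union>F'"
          using H cov op unfolding compact_space_def compactin_def by (metis imageE)
        then obtain F where F: "finite F" "F \<subseteq> U'" "F' = \<phi> ` F"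
          by (meson finite_subset_image)
        show "\<exists>F. finite F \<and> F \<subseteq> U \<and> topspace (topology_generated_by (Bk k)) \<subseteq> \<Union> F"
        proof (intro exI[of _ F] conjI)
          show "finite F" "F \<subseteq> U" using F U'_def by auto
          show "topspace (topology_generated_by (Bk k)) \<subseteq> \<Union> F"
          proof
            fix x assume "x \<in> topspace (topology_generated_by (Bk k))"
            then have x: "x \<in> Xk k" using uBk by simp
            then have "x \<in> X" using XkX[OF k] by auto
            then have "x \<in> topspace (topology_generated_by B)" using uB by simp
            then have "x \<in> \<Union>F'" using F'(3) by blast
            then obtain u where "u \<in> F" "x \<in> \<phi> u" using F by auto
            then show "x \<in> \<Union>F" using x unfolding \<phi>_def by auto
          qed
        qed
      qed
    qed
  qed
  then show ?thesis using T Tk unfolding X_def le_def by simp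
qed

end
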